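(* In the setting of the context, there is a constant $N_2>0$ such that for every integer $r\ge r_0$ and all $\epsilon,\epsilon'\in\{-1,1\}$ there is a path in the Cayley graph $\Gamma(G_2,S_2)$ connecting $s_1^{\epsilon r}$ to $s_2^{\epsilon' r}$ which lies outside the open ball $B(e,r)$ and has length at most $N_2r\bigl(f(N_2r)+1\bigr)$.
   Context: $H$ is a finitely presented group with finite generating set $T$, containing a free subgroup $F$ of rank $p$ with free basis $R=\{d_1,\dots,d_p\}\subset T$. $F_x,F_y,F_z$ are free of rank $p$ with bases $R_x=\{x_i\},R_y=\{y_i\},R_z=\{z_i\}$. $G_1=[H\ast_{\langle d_i=x_iy_i^{-1}\rangle}(F_x\times F_y\times F_z)]\times\langle s_1\rangle$; $a_i=x_iz_i$, $b_i=y_iz_i$, $R_{xz}=\{a_i\}$, $R_{yz}=\{b_i\}$; $G_2=\langle G_1,s_2\mid s_2^{-1}a_is_2=b_i,\ 1\le i\le p\rangle$; $S_2=T\cup R_x\cup R_y\cup R_z\cup R_{xz}\cup R_{yz}\cup\{s_1,s_2\}$. $f=\Delta^{-1}$ where $\Delta$ is a non-decreasing bijection of $[0,\infty)$ Lipschitz equivalent to $\mathrm{Dist}_F^H$ (with $\mathrm{Dist}_F^H(n)=\max\{|g|_R:g\in F,|g|_T\le n\}$), $\Delta(r)\ge r$ for $r\ge1$, $f(|g|_R)\le|g|_T$ for $g\in F$; and $D>1$, $r_0\ge1$ are constants such that for each $r\ge r_0$ there is an element $u\in F$ palindromic with respect to $R$ with $r/D\le|u|_R\le r$ and $|u|_T\le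 Df(r)$. (Such data exist under the standing assumption that $\mathrm{Dist}_F^H$ admits an exponentially bounded sequence of palindromic certificates in $F$.) *)

theory Defs
  imports "HOL-Algebra.Algebra"
begin

definition word_eval :: "('a, 'b) monoid_scheme \<Rightarrow> ('a \<times> bool) list \<Rightarrow> 'a" where
  "word_eval G w = foldr (\<lambda>(g, b) acc. (if b then inv\<^bsub>G\<^esub> g else g) \<otimes>\<^bsub>G\<^esub> acc) w \<one>\<^bsub>G\<^esub>"

inductive word_eq :: "('g \<times> bool) list set \<Rightarrow> ('g \<times> bool) list \<Rightarrow> ('g \<times> bool) list \<Rightarrow> bool"
  for Rel where
  we_refl: "word_eq Rel u u"
| we_sym: "word_eq Rel u v \<Longrightarrow> word_eq Rel v u"
| we_trans: "word_eq Rel u v \<Longrightarrow> word_eq Rel v w \<Longrightarrow> word_eq Rel u w"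
| we_cancel: "word_eq Rel (u @ [(a, b), (a, \<not> b)] @ v) (u @ v)"
| we_rel: "r \<in> Rel \<Longrightarrow> word_eq Rel (u @ r @ v) (u @ v)"

definition freely_reduced :: "('g \<times> bool) list \<Rightarrow> bool" where
  "freely_reduced w \<longleftrightarrow>
     (\<forall>i. Suc i < length w \<longrightarrow> \<not> (fst (w ! i) = fst (w ! Suc i) \<and> snd (w ! i) \<noteq> snd (w ! Suc i)))"

definition finitely_presented_on :: "('a, 'b) monoid_scheme \<Rightarrow> 'a set \<Rightarrow> bool" where
  "finitely_presented_on H T \<longleftrightarrow>
     group H \<and> finite T \<and> T \<subseteq> carrier H \<and> generate H T = carrier H \<and>
     (\<exists>Rel. finite Rel \<and> Rel \<subseteq> lists (T \<times> UNIV) \<and>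
        (\<forall>w \<in> lists (T \<times> UNIV). word_eval H w = \<one>\<^bsub>H\<^esub> \<longleftrightarrow> word_eq Rel w []))"

definition wlen :: "('a, 'b) monoid_scheme \<Rightarrow> 'a set \<Rightarrow> 'a \<Rightarrow> nat" where
  "wlen H S g = (LEAST n. \<exists>w \<in> lists (S \<times> UNIV). length w = n \<and> word_eval H w = g)"

definition free_basis :: "('a, 'b) monoid_scheme \<Rightarrow> (nat \<Rightarrow> 'a) \<Rightarrow> nat \<Rightarrow> bool" where
  "free_basis H d p \<longleftrightarrow> inj_on d {..<p} \<and>
     (\<forall>w \<in> lists (d ` {..<p} \<times> UNIV). freely_reduced w \<and> w \<noteq> [] \<longrightarrow> word_eval H w \<noteq> \<one>\<^bsub>H\<^esub>)"

definition palindromic :: "('a, 'b) monoid_scheme \<Rightarrow> 'a set \<Rightarrow> 'a \<Rightarrow> bool" where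
  "palindromic H R u \<longleftrightarrow>
     (\<exists>w \<in> lists (R \<times> UNIV). freely_reduced w \<and> word_eval H w = u \<and> rev w = w)"

definition distortion :: "('a, 'b) monoid_scheme \<Rightarrow> 'a set \<Rightarrow> 'a set \<Rightarrow> nat \<Rightarrow> nat" where
  "distortion H T R n = Max {wlen H R g | g. g \<in> generate H R \<and> wlen H T g \<le> n}"

definition lipschitz_equiv :: "(real \<Rightarrow> real) \<Rightarrow> (nat \<Rightarrow> nat) \<Rightarrow> bool" where
  "lipschitz_equiv \<Delta> Dist \<longleftrightarrow> (\<exists>C::nat. C \<ge> 1 \<and> (\<forall>n::nat.
      \<Delta> (real n) \<le> real C * real (Dist (C * n + C)) + real (C * n + C) \<and>
      real (Dist n) \<le> real C * \<Delta> (real (C * n + C)) + real (C * n + C)))"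

datatype 'a gen2 = Tg 'a | Xg nat | Yg nat | Zg nat | Ag nat | Bg nat | S1g | S2g

fun valid2 :: "'a set \<Rightarrow> nat \<Rightarrow> 'a gen2 \<Rightarrow> bool" where
  "valid2 T p (Tg t) = (t \<in> T)"
| "valid2 T p (Xg i) = (i < p)"
| "valid2 T p (Yg i) = (i < p)"
| "valid2 T p (Zg i) = (i < p)"
| "valid2 T p (Ag i) = (i < p)"
| "valid2 T p (Bg i) = (i < p)"
| "valid2 T p S1g = True"
| "valid2 T p S2g = True"

definition commutator :: "'g \<Rightarrow> 'g \<Rightarrow> ('g \<times> bool) list" where
  "commutator a b = [(a, False), (b, False), (a, True), (b, True)]"

text \<open>Relators of G_2 over S_2:
  all relations of H on T; d_i = x_i y_i^-1; x,y,z families pairwise commuting;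
  s_1 central in G_1; a_i = x_i z_i; b_i = y_i z_i; s_2^-1 a_i s_2 = b_i.\<close>
definition rels2 :: "('a, 'b) monoid_scheme \<Rightarrow> 'a set \<Rightarrow> (nat \<Rightarrow> 'a) \<Rightarrow> nat \<Rightarrow> ('a gen2 \<times> bool) list set" where
  "rels2 H T d p =
     {map (\<lambda>(t, b). (Tg t, b)) w | w. w \<in> lists (T \<times> UNIV) \<and> word_eval H w = \<one>\<^bsub>H\<^esub>}
   \<union> {[(Tg (d i), False), (Yg i, False), (Xg i, True)] | i. i < p}
   \<union> {commutator (Xg i) (Yg j) | i j. i < p \<and> j < p}
   \<union> {commutator (Xg i) (Zg j) | i j. i < p \<and> j < p}
   \<union> {commutator (Yg i) (Zg j) | i j. i < p \<and> j < p}
   \<union> {commutator S1g g | g. valid2 T p g \<and> g \<noteq> S1g \<and> g \<noteq> S2g}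
   \<union> {[(Ag i, False), (Zg i, True), (Xg i, True)] | i. i < p}
   \<union> {[(Bg i, False), (Zg i, True), (Yg i, True)] | i. i < p}
   \<union> {[(S2g, True), (Ag i, False), (S2g, False), (Bg i, True)] | i. i < p}"

text \<open>Word length in G_2 with respect to S_2 of the element represented by w
  (= distance from e in the Cayley graph Gamma(G_2, S_2)).\<close>
definition len2 :: "('a, 'b) monoid_scheme \<Rightarrow> 'a set \<Rightarrow> (nat \<Rightarrow> 'a) \<Rightarrow> nat \<Rightarrow> ('a gen2 \<times> bool) list \<Rightarrow> nat" where
  "len2 H T d p w = (LEAST n. \<exists>w'. (\<forall>l \<in> set w'. valid2 T p (fst l)) \<and> length w' = n
                                   \<and> word_eq (rels2 H T d p) w w')"

end

theory Submission
  imports Defs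
begin

definition flp :: "'g \<times> bool \<Rightarrow> 'g \<times> bool" where "flp l = (fst l, \<not> snd l)"
definition invw :: "('g \<times> bool) list \<Rightarrow> ('g \<times> bool) list" where "invw w = rev (map flp w)"

lemma flp_flp[simp]: "flp (flp l) = l" by (simp add: flp_def)
lemma fst_flp[simp]: "fst (flp l) = fst l" by (simp add: flp_def)
lemma snd_flp[simp]: "snd (flp l) = (\<not> snd l)" by (simp add: flp_def)
lemma flp_pair[simp]: "flp (a, b) = (a, \<not> b)" by (simp add: flp_def)
lemma invw_simps[simp]: "invw [] = []" "invw (a # w) = invw w @ [flp a]"
  "invw (x @ y) = invw y @ invw x" "invw (invw w) = w" "length (invw w) = length w"
  by (auto simp: invw_def rev_map comp_def)
lemma set_invw[simp]: "set (invw w) = flp ` set w" by (simp add: invw_def)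
lemma fst_set_invw[simp]: "fst ` flp ` S = fst ` S" by (simp add: image_image)

fun push :: "'g \<times> bool \<Rightarrow> ('g \<times> bool) list \<Rightarrow> ('g \<times> bool) list" where
  "push a [] = [a]"
| "push a (b # L) = (if fst a = fst b \<and> snd a \<noteq> snd b then L else a # b # L)"

fun rd :: "('g \<times> bool) list \<Rightarrow> bool" where
  "rd [] = True"
| "rd [a] = True"
| "rd (a # b # L) = (\<not> (fst a = fst b \<and> snd a \<noteq> snd b) \<and> rd (b # L))"

definition red :: "('g \<times> bool) list \<Rightarrow> ('g \<times> bool) list" where
  "red w = foldr push w []"

lemma rd_tl: "rd (a # L) \<Longrightarrow> rd L"
  by (cases L) auto

lemma push_rd: "rd L \<Longrightarrow> rd (push a L)"
  by (cases L rule: rd.cases) (auto dest: rd_tl)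

lemma foldr_push_rd: "rd L \<Longrightarrow> rd (foldr push x L)"
  by (induction x) (auto intro: push_rd)

lemma rd_red: "rd (red w)"
  unfolding red_def by (rule foldr_push_rd) simp

lemma push_cancel: "rd L \<Longrightarrow> push (flp a) (push a L) = L"
proof (cases L rule: rd.cases)
  case (3 b c L')
  assume r: "rd L"
  then show ?thesis using 3 by (cases a; cases b; cases c; auto)
qed (cases a; auto)+

lemma push_cancel': "rd L \<Longrightarrow> push a (push (flp a) L) = L"
  using push_cancel[of L "flp a"] by simp

lemma push_fold: "rd M \<Longrightarrow> rd L \<Longrightarrow> foldr push (push a M) L = push a (foldr push M L)"
proof (cases M)
  case (Cons b M')
  assume rM: "rd M" and rL: "rd L"
  show ?thesis
  proof (cases "fst a = fst b \<and> snd a \<noteq> snd b")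
    case True
    then have "b = flp a" by (cases a; cases b; auto)
    moreover have "rd (foldr push M' L)" using rM rL Cons by (auto intro: foldr_push_rd dest: rd_tl)
    ultimately show ?thesis using Cons True by (simp add: push_cancel')
  qed (use Cons in auto)
qed simp

lemma fold_red: "rd L \<Longrightarrow> foldr push x L = foldr push (red x) L"
proof (induction x)
  case (Cons a x)
  have "foldr push (red (a # x)) L = foldr push (push a (red x)) L" by (simp add: red_def)
  also have "\<dots> = push a (foldr push (red x) L)" using Cons by (simp add: push_fold rd_red)
  finally show ?case using Cons by simp
qed (simp add: red_def)

lemma fold_inv: "rd L \<Longrightarrow> foldr push (invw v) (foldr push v L) = L"
proof (induction v arbitrary: L)
  case (Cons a v)
  have "rd (foldr push v L)" using Cons by (simp add: foldr_push_rd)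
  then show ?case using Cons by (simp add: push_cancel)
qed simp

lemma red_append: "red (x @ y) = foldr push x (red y)"
  by (simp add: red_def)

lemma red_rd: "rd L \<Longrightarrow> red L = L"
proof (induction L rule: rd.induct)
  case (3 a b L)
  then show ?case by (cases a; cases b; auto simp: red_def)
qed (simp_all add: red_def)

lemma length_push: "length (push a L) \<le> Suc (length L)"
  by (cases L) auto

lemma length_foldr_push: "length (foldr push x L) \<le> length x + length L"
  by (induction x) (auto intro: le_trans[OF length_push])

lemma length_red: "length (red w) \<le> length w"
  using length_foldr_push[of w "[]"] by (simp add: red_def)

lemma set_push: "set (push a L) \<subseteq> insert a (set L)"
  by (cases L) auto

lemma set_foldr_push: "set (foldr push x L) \<subseteq> set x \<union> set L"
  by (induction x) (use set_push in fastforce)+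

lemma set_red: "set (red w) \<subseteq> set w"
  using set_foldr_push[of w "[]"] by (simp add: red_def)

lemma red_nil_ctx: "red B = [] \<Longrightarrow> red (A @ B @ C) = red (A @ C)"
proof -
  assume "red B = []"
  have "red (A @ B @ C) = foldr push A (foldr push B (red C))" by (simp add: red_def)
  also have "foldr push B (red C) = foldr push (red B) (red C)" by (rule fold_red) (rule rd_red)
  finally show ?thesis using \<open>red B = []\<close> by (simp add: red_def)
qed

lemma rd_iff: "rd w \<longleftrightarrow> freely_reduced w"
proof (induction w rule: rd.induct)
  case (3 a b L)
  have "freely_reduced (a # b # L) \<longleftrightarrow> \<not> (fst a = fst b \<and> snd a \<noteq> snd b) \<and> freely_reduced (b # L)"
    unfolding freely_reduced_def
    apply (rule iffI)
     apply (intro conjI allI impI)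
      apply (drule spec[of _ 0]; simp)
     apply (drule_tac x="Suc i" in spec; simp)
    apply clarify
    subgoal for i by (cases i) auto
    done
  then show ?case using 3 by simp
qed (auto simp: freely_reduced_def)


lemma weval_nil[simp]: "word_eval G [] = \<one>\<^bsub>G\<^esub>" by (simp add: word_eval_def)
lemma weval_cons[simp]: "word_eval G ((g, b) # L) = (if b then inv\<^bsub>G\<^esub> g else g) \<otimes>\<^bsub>G\<^esub> word_eval G L"
  by (simp add: word_eval_def)

context group
begin

lemma weval_carrier: "fst ` set w \<subseteq> carrier G \<Longrightarrow> word_eval G w \<in> carrier G"
  by (induction w) auto

lemma weval_append: "fst ` set x \<subseteq> carrier G \<Longrightarrow> fst ` set y \<subseteq> carrier G \<Longrightarrow>
    word_eval G (x @ y) = word_eval G x \<otimes> word_eval G y"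
proof (induction x)
  case (Cons a x)
  then show ?case by (cases a) (auto simp: m_assoc weval_carrier)
qed (simp add: weval_carrier)

lemma weval_push: "fst ` set (a # L) \<subseteq> carrier G \<Longrightarrow> word_eval G (push a L) = word_eval G (a # L)"
proof (cases L)
  case (Cons c L')
  assume h: "fst ` set (a # L) \<subseteq> carrier G"
  obtain g b where a: "a = (g, b)" by (cases a)
  obtain g' b' where c: "c = (g', b')" by (cases c)
  have wc: "word_eval G L' \<in> carrier G" using h Cons by (intro weval_carrier) auto
  have g: "g \<in> carrier G" using h a by auto
  show ?thesis
  proof (cases "g = g' \<and> b \<noteq> b'")
    case True
    then show ?thesis using Cons a c g wc
      by (auto simp: m_assoc[symmetric])
  qed (use Cons a c in auto)
qed simp

lemma weval_foldr_push: "fst ` set x \<subseteq> carrier G \<Longrightarrow> fst ` set L \<subseteq> carrier G \<Longrightarrow>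
   word_eval G (foldr push x L) = word_eval G (x @ L)"
proof (induction x)
  case (Cons a x)
  have "fst ` set (foldr push x L) \<subseteq> carrier G" using Cons set_foldr_push[of x L] by fastforce
  then have "word_eval G (push a (foldr push x L)) = word_eval G (a # foldr push x L)"
    using Cons by (intro weval_push) auto
  then show ?case using Cons by (cases a) auto
qed simp

lemma weval_red: "fst ` set x \<subseteq> carrier G \<Longrightarrow> word_eval G (red x) = word_eval G x"
  using weval_foldr_push[of x "[]"] by (simp add: red_def)

lemma weval_invw: "fst ` set x \<subseteq> carrier G \<Longrightarrow> word_eval G (invw x) = inv (word_eval G x)"
proof (induction x)
  case (Cons a x)
  obtain g b where a: "a = (g, b)" by (cases a)
  have g: "g \<in> carrier G" using Cons a by auto
  have "fst ` set (invw x) \<subseteq> carrier G" using Cons by auto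
  then have "word_eval G (invw (a # x)) = word_eval G (invw x) \<otimes> word_eval G [flp a]"
    using g a by (simp add: weval_append)
  then show ?case using Cons a g weval_carrier[of x]
    by (auto simp: inv_mult_group)
qed simp

end

lemma free_unique:
  assumes grp: "group H" and R: "d ` {..<p} \<subseteq> carrier H" and free: "free_basis H d p"
    and w: "w \<in> lists (d ` {..<p} \<times> UNIV)" and w1: "w1 \<in> lists (d ` {..<p} \<times> UNIV)"
    and rw: "rd w" and rw1: "rd w1" and ev: "word_eval H w = word_eval H w1"
  shows "w = w1"
proof -
  interpret group H by (rule grp)
  have cw: "fst ` set w \<subseteq> carrier H" using w R by fastforce
  have cw1: "fst ` set w1 \<subseteq> carrier H" using w1 R by fastforce
  define v where "v = red (w @ invw w1)"
  have "set v \<subseteq> set (w @ invw w1)" unfolding v_def by (rule set_red)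
  then have vl: "v \<in> lists (d ` {..<p} \<times> UNIV)" using w w1 by (fastforce simp: flp_def)
  have cinv: "fst ` set (invw w1) \<subseteq> carrier H" using cw1 by auto
  have "word_eval H v = word_eval H w \<otimes>\<^bsub>H\<^esub> inv\<^bsub>H\<^esub> word_eval H w1"
  proof -
    have "fst ` set (w @ invw w1) \<subseteq> carrier H" using cw cinv by auto
    then have "word_eval H v = word_eval H (w @ invw w1)" unfolding v_def by (rule weval_red)
    also have "\<dots> = word_eval H w \<otimes>\<^bsub>H\<^esub> word_eval H (invw w1)" using cw cinv by (rule weval_append)
    finally show ?thesis using weval_invw[OF cw1] by simp
  qed
  also have "\<dots> = \<one>\<^bsub>H\<^esub>" using ev weval_carrier[OF cw1] by simp
  finally have ev1: "word_eval H v = \<one>\<^bsub>H\<^esub>" .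
  have "rd v" unfolding v_def by (rule rd_red)
  then have v0: "v = []" using free vl ev1 unfolding free_basis_def by (auto simp: rd_iff)
  have "red (w @ invw w1 @ w1) = foldr push w (foldr push (invw w1) (foldr push w1 []))"
    by (simp add: red_def)
  also have "\<dots> = w" using rw by (simp add: fold_inv red_rd[unfolded red_def])
  finally have e1: "red (w @ invw w1 @ w1) = w" .
  have "red (w @ invw w1 @ w1) = foldr push (w @ invw w1) (red w1)"
    by (simp add: red_append)
  also have "\<dots> = foldr push (w @ invw w1) w1" using rw1 by (simp add: red_rd)
  also have "\<dots> = foldr push v w1" unfolding v_def by (rule fold_red[OF rw1])
  finally show ?thesis using e1 v0 by simp
qed


lemma we_ctx: "word_eq Rel x y \<Longrightarrow> word_eq Rel (c @ x @ e) (c @ y @ e)"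
proof (induction rule: word_eq.induct)
  case (we_refl u) then show ?case by (rule word_eq.we_refl)
next
  case (we_sym u v) from we_sym.IH show ?case by (rule word_eq.we_sym)
next
  case (we_trans u v w) from we_trans.IH show ?case by (rule word_eq.we_trans)
next
  case (we_cancel u a b v) then show ?case using word_eq.we_cancel[of Rel "c @ u" a b "v @ e"] by simp
next
  case (we_rel r u v) then show ?case using word_eq.we_rel[of r Rel "c @ u" "v @ e"] by simp
qed

lemmas we_t = word_eq.we_trans
lemmas we_s = word_eq.we_sym
lemmas we_r = word_eq.we_refl

lemma we_chain:
  assumes "word_eq Rel a b" "word_eq Rel b' c" "b = b'" "a = a0" "c = c0"
  shows "word_eq Rel a0 c0"
proof -
  from assms(2) have "word_eq Rel b c" by (simp only: assms(3))
  with assms(1) have "word_eq Rel a c" by (rule word_eq.we_trans)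
  then show ?thesis by (simp only: assms(4,5))
qed

lemma we_chain3:
  assumes "word_eq Rel a b" "word_eq Rel b' c" "word_eq Rel c' e" "b = b'" "c = c'" "a = a0" "e = e0"
  shows "word_eq Rel a0 e0"
proof -
  from assms(2) have "word_eq Rel b c" by (simp only: assms(4))
  with assms(1) have "word_eq Rel a c" by (rule word_eq.we_trans)
  moreover from assms(3) have "word_eq Rel c e" by (simp only: assms(5))
  ultimately have "word_eq Rel a e" by (rule word_eq.we_trans)
  then show ?thesis by (simp only: assms(6,7))
qed

lemma we_ctxL: "word_eq Rel x y \<Longrightarrow> word_eq Rel (c @ x) (c @ y)"
  using we_ctx[of Rel x y c "[]"] by simp
lemma we_ctxR: "word_eq Rel x y \<Longrightarrow> word_eq Rel (x @ e) (y @ e)"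
  using we_ctx[of Rel x y "[]" e] by simp

lemma we_app: "word_eq Rel x x' \<Longrightarrow> word_eq Rel y y' \<Longrightarrow> word_eq Rel (x @ y) (x' @ y')"
  by (rule we_t[OF we_ctxR we_ctxL])

lemma we_canc: "word_eq Rel (u @ [l, flp l] @ v) (u @ v)"
  using word_eq.we_cancel[of Rel u "fst l" "snd l" v] by (cases l) simp

lemma we_canc': "word_eq Rel (u @ [flp l, l] @ v) (u @ v)"
  using we_canc[of Rel u "flp l" v] by simp

lemma we_inv_cancel: "word_eq Rel (w @ invw w) []"
proof (induction w)
  case (Cons a w)
  have "word_eq Rel ([a] @ (w @ invw w) @ [flp a]) ([a] @ [] @ [flp a])" using Cons by (rule we_ctx)
  moreover have "word_eq Rel [a, flp a] []" using we_canc[of Rel "[]" a "[]"] by simp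
  ultimately have "word_eq Rel ([a] @ (w @ invw w) @ [flp a]) []" by (rule we_chain) simp_all
  then show ?case by simp
qed (simp add: we_r)

lemma we_inv_cancel': "word_eq Rel (invw w @ w) []"
  using we_inv_cancel[of Rel "invw w"] by simp

lemma we_from_nil: "word_eq Rel (x @ invw y) [] \<Longrightarrow> word_eq Rel x y"
proof -
  assume h: "word_eq Rel (x @ invw y) []"
  have 0: "word_eq Rel (x @ (invw y @ y)) (x @ [])" by (rule we_ctxL[OF we_inv_cancel'])
  have 1: "word_eq Rel x ((x @ invw y) @ y)" using we_s[OF 0] by simp
  have "word_eq Rel ((x @ invw y) @ y) ([] @ y)" by (rule we_ctxR[OF h])
  with 1 have "word_eq Rel x ([] @ y)" by (rule we_t)
  then show ?thesis by simp
qed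

lemma we_to_nil: "word_eq Rel x y \<Longrightarrow> word_eq Rel (x @ invw y) []"
  by (rule we_t[OF we_ctxR we_inv_cancel])

lemma we_inv: "word_eq Rel x y \<Longrightarrow> word_eq Rel (invw x) (invw y)"
proof -
  assume h: "word_eq Rel x y"
  have "word_eq Rel (invw x @ y) (invw x @ x)" by (rule we_ctxL[OF we_s[OF h]])
  then have "word_eq Rel (invw x @ y) []" using we_inv_cancel' by (rule we_t)
  then have "word_eq Rel (invw x @ invw (invw y)) []" by simp
  then show ?thesis by (rule we_from_nil)
qed

lemma rel_nil: "r \<in> Rel \<Longrightarrow> word_eq Rel r []"
  using word_eq.we_rel[of r Rel "[]" "[]"] by simp

definition lc :: "('g \<times> bool) list set \<Rightarrow> 'g \<times> bool \<Rightarrow> 'g \<times> bool \<Rightarrow> bool" where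
  "lc Rel l1 l2 \<longleftrightarrow> word_eq Rel [l1, l2] [l2, l1]"

lemma lc_sym: "lc Rel l1 l2 \<Longrightarrow> lc Rel l2 l1"
  unfolding lc_def by (rule we_s)

lemma lc_flip1: "lc Rel l1 l2 \<Longrightarrow> lc Rel (flp l1) l2"
proof -
  assume h: "lc Rel l1 l2"
  have 1: "word_eq Rel [flp l1, l2] ([flp l1, l2] @ [l1, flp l1] @ [])"
    using we_s[OF we_canc[of Rel "[flp l1, l2]" l1 "[]"]] by simp
  have 2: "word_eq Rel ([flp l1] @ [l2, l1] @ [flp l1]) ([flp l1] @ [l1, l2] @ [flp l1])"
    using h unfolding lc_def by (rule we_ctx[OF we_s])
  have 3: "word_eq Rel ([] @ [flp l1, l1] @ [l2, flp l1]) ([] @ [l2, flp l1])"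
    using we_canc'[of Rel "[]" l1] by simp
  show ?thesis unfolding lc_def by (rule we_chain3[OF 1 2 3]) simp_all
qed

lemma lc_flip2: "lc Rel l1 l2 \<Longrightarrow> lc Rel l1 (flp l2)"
  by (rule lc_sym[OF lc_flip1[OF lc_sym]])

lemma lc_all: "lc Rel (a, False) (b, False) \<Longrightarrow> lc Rel (a, e) (b, f)"
proof -
  assume h: "lc Rel (a, False) (b, False)"
  have h1: "lc Rel (a, True) (b, False)" using lc_flip1[OF h] by simp
  have h2: "lc Rel (a, False) (b, True)" using lc_flip2[OF h] by simp
  have h3: "lc Rel (a, True) (b, True)" using lc_flip2[OF h1] by simp
  show ?thesis using h h1 h2 h3 by (cases e; cases f) auto
qed

lemma lc_commutator: "commutator a b \<in> Rel \<Longrightarrow> lc Rel (a, e) (b, f)"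
proof -
  assume "commutator a b \<in> Rel"
  then have "word_eq Rel ([(a, False), (b, False)] @ invw [(b, False), (a, False)]) []"
    using rel_nil by (fastforce simp: commutator_def)
  then have "lc Rel (a, False) (b, False)" unfolding lc_def by (rule we_from_nil)
  then show ?thesis by (rule lc_all)
qed

lemma comm_letter_word: "(\<forall>q \<in> set Q. lc Rel l q) \<Longrightarrow> word_eq Rel ([l] @ Q) (Q @ [l])"
proof (induction Q)
  case (Cons q Q)
  have 1: "word_eq Rel ([l, q] @ Q) ([q, l] @ Q)" using Cons by (intro we_ctxR) (simp add: lc_def)
  have 2: "word_eq Rel ([q] @ ([l] @ Q)) ([q] @ (Q @ [l]))" using Cons by (intro we_ctxL) simp
  have "word_eq Rel ([l, q] @ Q) ([q] @ (Q @ [l]))" by (rule we_chain[OF 1 2]) simp_all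
  then show ?case by simp
qed (simp add: we_r)

lemma comm_words: "(\<forall>l \<in> set P. \<forall>q \<in> set Q. lc Rel l q) \<Longrightarrow> word_eq Rel (P @ Q) (Q @ P)"
proof (induction P)
  case (Cons l P)
  have 1: "word_eq Rel ([l] @ (P @ Q)) ([l] @ (Q @ P))" using Cons by (intro we_ctxL) simp
  have 2: "word_eq Rel (([l] @ Q) @ P) ((Q @ [l]) @ P)" using Cons by (intro we_ctxR comm_letter_word) simp
  have "word_eq Rel ([l] @ (P @ Q)) ((Q @ [l]) @ P)" by (rule we_chain[OF 1 2]) simp_all
  then show ?case by simp
qed (simp add: we_r)

lemma move_word: "(\<forall>l \<in> set P. word_eq Rel [l, s] [s, g l]) \<Longrightarrow> word_eq Rel (P @ [s]) ([s] @ map g P)"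
proof (induction P)
  case (Cons l P)
  have 1: "word_eq Rel ([l] @ (P @ [s])) ([l] @ ([s] @ map g P))" using Cons by (intro we_ctxL) simp
  have 2: "word_eq Rel ([l, s] @ map g P) ([s, g l] @ map g P)" using Cons by (intro we_ctxR) simp
  have "word_eq Rel ([l] @ (P @ [s])) ([s, g l] @ map g P)" by (rule we_chain[OF 1 2]) simp_all
  then show ?case by simp
qed (simp add: we_r)

lemma expand_word: "(\<forall>c \<in> set iw. word_eq Rel [f c] [g c, h c]) \<Longrightarrow>
    word_eq Rel (map f iw) (concat (map (\<lambda>c. [g c, h c]) iw))"
proof (induction iw)
  case (Cons c iw)
  then show ?case using we_app[of Rel "[f c]" "[g c, h c]"] by simp
qed (simp add: we_r)

lemma interleave_word: "(\<forall>c \<in> set iw. \<forall>c' \<in> set iw. lc Rel (h c) (g c')) \<Longrightarrow>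
    word_eq Rel (concat (map (\<lambda>c. [g c, h c]) iw)) (map g iw @ map h iw)"
proof (induction iw)
  case (Cons c iw)
  have 1: "word_eq Rel ([g c, h c] @ concat (map (\<lambda>c. [g c, h c]) iw)) ([g c, h c] @ (map g iw @ map h iw))"
    using Cons by (intro we_ctxL) simp
  have 2: "word_eq Rel ([g c] @ ([h c] @ map g iw) @ map h iw) ([g c] @ (map g iw @ [h c]) @ map h iw)"
    using Cons by (intro we_ctx comm_words) simp
  have "word_eq Rel ([g c, h c] @ concat (map (\<lambda>c. [g c, h c]) iw)) ([g c] @ (map g iw @ [h c]) @ map h iw)" by (rule we_chain[OF 1 2]) simp_all
  then show ?case by simp
qed (simp add: we_r)

lemma rep_cancel: "word_eq Rel (replicate r l @ replicate r (flp l)) []"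
proof (induction r)
  case (Suc r)
  have 2: "word_eq Rel ([l] @ (replicate r l @ replicate r (flp l)) @ [flp l]) ([l] @ [] @ [flp l])"
    using Suc by (rule we_ctx)
  have 3: "word_eq Rel [l, flp l] []" using we_canc[of Rel "[]" l "[]"] by simp
  have "word_eq Rel ([l] @ (replicate r l @ replicate r (flp l)) @ [flp l]) []"
    by (rule we_chain[OF 2 3]) simp_all
  moreover have "replicate (Suc r) l @ replicate (Suc r) (flp l) = [l] @ (replicate r l @ replicate r (flp l)) @ [flp l]"
    by (simp only: replicate_Suc replicate_append_same[symmetric, of "flp l" r]) simp
  ultimately show ?case by simp
qed (simp add: we_r)

lemma rel3: "[l, m, n] \<in> Rel \<Longrightarrow> word_eq Rel [l] [flp n, flp m]"
  by (rule we_from_nil) (simp add: rel_nil)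

lemma conj_flip: "word_eq Rel [x, s] [s, y] \<Longrightarrow> word_eq Rel [flp x, s] [s, flp y]"
proof -
  assume h: "word_eq Rel [x, s] [s, y]"
  have 1: "word_eq Rel [flp x, s] ([flp x, s] @ [y, flp y] @ [])"
    using we_s[OF we_canc[of Rel "[flp x, s]" y "[]"]] by simp
  have 2: "word_eq Rel ([flp x] @ [s, y] @ [flp y]) ([flp x] @ [x, s] @ [flp y])"
    by (rule we_ctx[OF we_s[OF h]])
  have 3: "word_eq Rel ([] @ [flp x, x] @ [s, flp y]) ([] @ [s, flp y])"
    using we_canc'[of Rel "[]" x] by simp
  show ?thesis by (rule we_chain3[OF 1 2 3]) simp_all
qed

lemma conj_other: "word_eq Rel [x, s] [s, y] \<Longrightarrow> word_eq Rel [y, flp s] [flp s, x]"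
proof -
  assume h: "word_eq Rel [x, s] [s, y]"
  have 1: "word_eq Rel [y, flp s] ([] @ [flp s, s] @ [y, flp s])"
    using we_s[OF we_canc'[of Rel "[]" s "[y, flp s]"]] by simp
  have 2: "word_eq Rel ([flp s] @ [s, y] @ [flp s]) ([flp s] @ [x, s] @ [flp s])"
    by (rule we_ctx[OF we_s[OF h]])
  have 3: "word_eq Rel ([flp s, x] @ [s, flp s] @ []) ([flp s, x] @ [])"
    using we_canc[of Rel "[flp s, x]" s] by simp
  show ?thesis by (rule we_chain3[OF 1 2 3]) simp_all
qed


lemma m_XY: "i < p \<Longrightarrow> j < p \<Longrightarrow> commutator (Xg i) (Yg j) \<in> rels2 H T d p"
  unfolding rels2_def by blast
lemma m_XZ: "i < p \<Longrightarrow> j < p \<Longrightarrow> commutator (Xg i) (Zg j) \<in> rels2 H T d p"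
  unfolding rels2_def by blast
lemma m_YZ: "i < p \<Longrightarrow> j < p \<Longrightarrow> commutator (Yg i) (Zg j) \<in> rels2 H T d p"
  unfolding rels2_def by blast
lemma m_SA: "i < p \<Longrightarrow> commutator S1g (Ag i) \<in> rels2 H T d p"
  unfolding rels2_def by (intro UnI1 UnI2) auto
lemma m_SB: "i < p \<Longrightarrow> commutator S1g (Bg i) \<in> rels2 H T d p"
  unfolding rels2_def by (intro UnI1 UnI2) auto
lemma m_A: "i < p \<Longrightarrow> [(Ag i, False), (Zg i, True), (Xg i, True)] \<in> rels2 H T d p"
  unfolding rels2_def by blast
lemma m_B: "i < p \<Longrightarrow> [(Bg i, False), (Zg i, True), (Yg i, True)] \<in> rels2 H T d p"
  unfolding rels2_def by blast
lemma m_D: "i < p \<Longrightarrow> [(Tg (d i), False), (Yg i, False), (Xg i, True)] \<in> rels2 H T d p"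
  unfolding rels2_def by blast
lemma m_S2: "i < p \<Longrightarrow> [(S2g, True), (Ag i, False), (S2g, False), (Bg i, True)] \<in> rels2 H T d p"
  unfolding rels2_def by (intro UnI2) blast
lemma m_H: "w \<in> lists (T \<times> UNIV) \<Longrightarrow> word_eval H w = \<one>\<^bsub>H\<^esub> \<Longrightarrow> map (\<lambda>(t, b). (Tg t, b)) w \<in> rels2 H T d p"
  unfolding rels2_def by (intro UnI1) blast

definition mkw :: "(nat \<Rightarrow> 'g) \<Rightarrow> (nat \<times> bool) list \<Rightarrow> ('g \<times> bool) list" where
  "mkw G iw = map (\<lambda>c. (G (fst c), snd c)) iw"

lemma set_mkw: "set (mkw G iw) = (\<lambda>c. (G (fst c), snd c)) ` set iw"
  by (simp add: mkw_def)

lemma move_map: "(\<forall>c \<in> set iw. word_eq Rel [f c, s] [s, g c]) \<Longrightarrow> word_eq Rel (map f iw @ [s]) ([s] @ map g iw)"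
proof (induction iw)
  case (Cons c iw)
  have 1: "word_eq Rel ([f c] @ (map f iw @ [s])) ([f c] @ ([s] @ map g iw))" using Cons by (intro we_ctxL) simp
  have 2: "word_eq Rel ([f c, s] @ map g iw) ([s, g c] @ map g iw)" using Cons by (intro we_ctxR) simp
  have "word_eq Rel ([f c] @ (map f iw @ [s])) ([s, g c] @ map g iw)" by (rule we_chain[OF 1 2]) simp_all
  then show ?case by simp
qed (simp add: we_r)

context
  fixes H :: "('a, 'b) monoid_scheme" and T :: "'a set" and d :: "nat \<Rightarrow> 'a" and p :: nat
begin

abbreviation "RR \<equiv> rels2 H T d p"

lemma lc_XY: "i < p \<Longrightarrow> j < p \<Longrightarrow> lc RR (Xg i, e) (Yg j, f)"
  by (rule lc_commutator) (rule m_XY)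
lemma lc_XZ: "i < p \<Longrightarrow> j < p \<Longrightarrow> lc RR (Xg i, e) (Zg j, f)"
  by (rule lc_commutator) (rule m_XZ)
lemma lc_YZ: "i < p \<Longrightarrow> j < p \<Longrightarrow> lc RR (Yg i, e) (Zg j, f)"
  by (rule lc_commutator) (rule m_YZ)
lemma lc_SA: "i < p \<Longrightarrow> lc RR (S1g, e) (Ag i, f)"
  by (rule lc_commutator) (rule m_SA)
lemma lc_SB: "i < p \<Longrightarrow> lc RR (S1g, e) (Bg i, f)"
  by (rule lc_commutator) (rule m_SB)

lemma A_exp: "i < p \<Longrightarrow> word_eq RR [(Ag i, b)] [(Xg i, b), (Zg i, b)]"
proof -
  assume i: "i < p"
  have 0: "word_eq RR [(Ag i, False)] [(Xg i, False), (Zg i, False)]"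
    using rel3[of "(Ag i, False)" "(Zg i, True)" "(Xg i, True)" RR] m_A[where H=H and T=T and d=d, OF i] by simp
  have 1: "word_eq RR [(Ag i, True)] [(Zg i, True), (Xg i, True)]" using we_inv[OF 0] by simp
  have 2: "word_eq RR [(Zg i, True), (Xg i, True)] [(Xg i, True), (Zg i, True)]"
    using lc_sym[OF lc_XZ[OF i i]] by (simp add: lc_def)
  show ?thesis using 0 we_t[OF 1 2] by (cases b) auto
qed

lemma B_exp: "i < p \<Longrightarrow> word_eq RR [(Bg i, b)] [(Yg i, b), (Zg i, b)]"
proof -
  assume i: "i < p"
  have 0: "word_eq RR [(Bg i, False)] [(Yg i, False), (Zg i, False)]"
    using rel3[of "(Bg i, False)" "(Zg i, True)" "(Yg i, True)" RR] m_B[where H=H and T=T and d=d, OF i] by simp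
  have 1: "word_eq RR [(Bg i, True)] [(Zg i, True), (Yg i, True)]" using we_inv[OF 0] by simp
  have 2: "word_eq RR [(Zg i, True), (Yg i, True)] [(Yg i, True), (Zg i, True)]"
    using lc_sym[OF lc_YZ[OF i i]] by (simp add: lc_def)
  show ?thesis using 0 we_t[OF 1 2] by (cases b) auto
qed

lemma D_exp: "i < p \<Longrightarrow> word_eq RR [(Tg (d i), b)] [(Xg i, b), (Yg i, \<not> b)]"
proof -
  assume i: "i < p"
  have 0: "word_eq RR [(Tg (d i), False)] [(Xg i, False), (Yg i, True)]"
    using rel3[of "(Tg (d i), False)" "(Yg i, False)" "(Xg i, True)" RR] m_D[where H=H and T=T and d=d, OF i] by simp
  have 1: "word_eq RR [(Tg (d i), True)] [(Yg i, False), (Xg i, True)]" using we_inv[OF 0] by simp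
  have 2: "word_eq RR [(Yg i, False), (Xg i, True)] [(Xg i, True), (Yg i, False)]"
    using lc_sym[OF lc_XY[OF i i]] by (simp add: lc_def)
  show ?thesis using 0 we_t[OF 1 2] by (cases b) auto
qed

lemma AS2: "i < p \<Longrightarrow> word_eq RR [(Ag i, b), (S2g, False)] [(S2g, False), (Bg i, b)]"
proof -
  assume i: "i < p"
  have r: "[(S2g, True), (Ag i, False), (S2g, False), (Bg i, True)] \<in> RR" using i by (rule m_S2[where H=H and T=T and d=d])
  have 1: "word_eq RR [(Ag i, False), (S2g, False), (Bg i, True), (S2g, True)]
       ([] @ [(S2g, False), flp (S2g, False)] @ [(Ag i, False), (S2g, False), (Bg i, True), (S2g, True)])"
    using we_s[OF we_canc[of RR "[]" "(S2g, False)" "[(Ag i, False), (S2g, False), (Bg i, True), (S2g, True)]"]] by simp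
  have 2: "word_eq RR ([(S2g, False)] @ [(S2g, True), (Ag i, False), (S2g, False), (Bg i, True)] @ [(S2g, True)])
       ([(S2g, False)] @ [] @ [(S2g, True)])"
    by (rule we_ctx) (rule rel_nil[OF r])
  have 3: "word_eq RR ([] @ [(S2g, False), flp (S2g, False)] @ []) ([] @ [])" by (rule we_canc)
  have "word_eq RR ([(Ag i, False), (S2g, False)] @ invw [(S2g, False), (Bg i, False)]) []"
    by (rule we_chain3[OF 1 2 3]) simp_all
  then have 0: "word_eq RR [(Ag i, False), (S2g, False)] [(S2g, False), (Bg i, False)]" by (rule we_from_nil)
  show ?thesis using 0 conj_flip[OF 0] by (cases b) auto
qed

lemma BS2: "i < p \<Longrightarrow> word_eq RR [(Bg i, b), (S2g, True)] [(S2g, True), (Ag i, b)]"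
  using conj_other[OF AS2[of i b]] by simp

lemma exp_gen:
  assumes ok: "\<forall>c \<in> set iw. fst c < p"
    and ex: "\<And>c. fst c < p \<Longrightarrow> word_eq RR [f c] [g c, h c]"
    and cm: "\<And>c c'. fst c < p \<Longrightarrow> fst c' < p \<Longrightarrow> lc RR (h c) (g c')"
  shows "word_eq RR (map f iw) (map g iw @ map h iw)"
proof -
  have 1: "word_eq RR (map f iw) (concat (map (\<lambda>c. [g c, h c]) iw))"
    using ok ex by (intro expand_word) auto
  have 2: "word_eq RR (concat (map (\<lambda>c. [g c, h c]) iw)) (map g iw @ map h iw)"
    using ok cm by (intro interleave_word) auto
  show ?thesis by (rule we_t[OF 1 2])
qed

lemma Wa_exp: "\<forall>c \<in> set iw. fst c < p \<Longrightarrow> word_eq RR (mkw Ag iw) (mkw Xg iw @ mkw Zg iw)"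
  unfolding mkw_def
  by (rule exp_gen) (auto intro: A_exp lc_sym[OF lc_XZ])

lemma Wb_exp: "\<forall>c \<in> set iw. fst c < p \<Longrightarrow> word_eq RR (mkw Bg iw) (mkw Yg iw @ mkw Zg iw)"
  unfolding mkw_def
  by (rule exp_gen) (auto intro: B_exp lc_sym[OF lc_YZ])

lemma Wd_exp: "\<forall>c \<in> set iw. fst c < p \<Longrightarrow>
    word_eq RR (mkw (\<lambda>i. Tg (d i)) iw) (mkw Xg iw @ map (\<lambda>c. (Yg (fst c), \<not> snd c)) iw)"
  unfolding mkw_def
  by (rule exp_gen) (auto intro: D_exp lc_sym[OF lc_XY])

lemma WYn_inv: "rev iw = iw \<Longrightarrow> map (\<lambda>c. (Yg (fst c), \<not> snd c)) iw = invw (mkw Yg iw)"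
proof -
  assume r: "rev iw = iw"
  have "invw (mkw Yg iw) = map (\<lambda>c. (Yg (fst c), \<not> snd c)) (rev iw)"
    by (simp add: invw_def mkw_def rev_map flp_def comp_def)
  then have "invw (mkw Yg iw) = map (\<lambda>c. (Yg (fst c), \<not> snd c)) iw" using r by simp
  then show ?thesis by (rule sym)
qed

lemma key_BD:
  assumes ok: "\<forall>c \<in> set iw. fst c < p" and r: "rev iw = iw"
  shows "word_eq RR (mkw Bg iw @ mkw (\<lambda>i. Tg (d i)) iw) (mkw Ag iw)"
proof -
  define Xw :: "('a gen2 \<times> bool) list" where "Xw = mkw Xg iw"
  define Yw :: "('a gen2 \<times> bool) list" where "Yw = mkw Yg iw"
  define Zw :: "('a gen2 \<times> bool) list" where "Zw = mkw Zg iw"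
  have wd: "word_eq RR (mkw (\<lambda>i. Tg (d i)) iw) (Xw @ invw Yw)"
    using Wd_exp[OF ok] unfolding WYn_inv[OF r] Xw_def Yw_def .
  have wb: "word_eq RR (mkw Bg iw) (Yw @ Zw)" using Wb_exp[OF ok] unfolding Yw_def Zw_def .
  have 1: "word_eq RR (mkw Bg iw @ mkw (\<lambda>i. Tg (d i)) iw) ((Yw @ Zw) @ (Xw @ invw Yw))"
    by (rule we_app[OF wb wd])
  have lYZX: "\<forall>l \<in> set Yw. \<forall>q \<in> set (Zw @ Xw). lc RR l q"
    using ok unfolding Xw_def Yw_def Zw_def by (auto simp: set_mkw intro: lc_YZ lc_sym[OF lc_XY])
  have 2: "word_eq RR ((Yw @ (Zw @ Xw)) @ invw Yw) (((Zw @ Xw) @ Yw) @ invw Yw)"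
    by (rule we_ctxR[OF comm_words[OF lYZX]])
  have 3: "word_eq RR ((Zw @ Xw) @ (Yw @ invw Yw)) ((Zw @ Xw) @ [])"
    by (rule we_ctxL[OF we_inv_cancel])
  have lZX: "\<forall>l \<in> set Zw. \<forall>q \<in> set Xw. lc RR l q"
    using ok unfolding Xw_def Zw_def by (auto simp: set_mkw intro: lc_sym[OF lc_XZ])
  have 4: "word_eq RR (Zw @ Xw) (Xw @ Zw)" by (rule comm_words[OF lZX])
  have 5: "word_eq RR (Xw @ Zw) (mkw Ag iw)" unfolding Xw_def Zw_def by (rule we_s[OF Wa_exp[OF ok]])
  have "word_eq RR (mkw Bg iw @ mkw (\<lambda>i. Tg (d i)) iw) ((Zw @ Xw) @ [])"
    by (rule we_chain3[OF 1 2 3]) simp_all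
  then have "word_eq RR (mkw Bg iw @ mkw (\<lambda>i. Tg (d i)) iw) (Xw @ Zw)" using 4 by (simp add: we_t)
  then show ?thesis using 5 by (rule we_t)
qed

lemma path_eq:
  fixes e e' :: bool and n :: nat and Tw :: "('a gen2 \<times> bool) list"
  assumes ok: "\<forall>c \<in> set iw. fst c < p" and r: "rev iw = iw"
    and tw: "word_eq RR Tw (mkw (\<lambda>i. Tg (d i)) iw)"
  defines "Wc \<equiv> (if e' then mkw Bg iw else mkw Ag iw)"
    and "C \<equiv> (if e' then invw Tw else Tw)"
  shows "word_eq RR (replicate n (S1g, e) @ (Wc @ replicate n (S1g, \<not> e) @ concat (replicate n ([(S2g, e')] @ C)) @ invw Wc))
            (replicate n (S2g, e'))"
proof -
  let ?Wd = "mkw (\<lambda>i. Tg (d i)) iw"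
  let ?Wa = "mkw Ag iw" and ?Wb = "mkw Bg iw"
  have K: "word_eq RR (?Wb @ ?Wd) ?Wa" by (rule key_BD[OF ok r])
  have step: "word_eq RR (Wc @ [(S2g, e')] @ C) ([(S2g, e')] @ Wc)"
  proof (cases e')
    case False
    have m: "word_eq RR (?Wa @ [(S2g, False)]) ([(S2g, False)] @ ?Wb)"
      unfolding mkw_def using ok by (intro move_map) (auto intro: AS2)
    have a: "word_eq RR ((?Wa @ [(S2g, False)]) @ Tw) (([(S2g, False)] @ ?Wb) @ Tw)" by (rule we_ctxR[OF m])
    have b: "word_eq RR (([(S2g, False)] @ ?Wb) @ Tw) (([(S2g, False)] @ ?Wb) @ ?Wd)" by (rule we_ctxL[OF tw])
    have c: "word_eq RR ([(S2g, False)] @ (?Wb @ ?Wd)) ([(S2g, False)] @ ?Wa)" by (rule we_ctxL[OF K])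
    have "word_eq RR ((?Wa @ [(S2g, False)]) @ Tw) ([(S2g, False)] @ ?Wa)"
      by (rule we_chain3[OF a b c]) simp_all
    then show ?thesis using False unfolding Wc_def C_def by simp
  next
    case True
    have m: "word_eq RR (?Wb @ [(S2g, True)]) ([(S2g, True)] @ ?Wa)"
      unfolding mkw_def using ok by (intro move_map) (auto intro: BS2)
    have "word_eq RR (?Wb @ invw (?Wa @ invw ?Wd)) (?Wa @ invw ?Wa)"
      using we_ctxR[OF K, of "invw ?Wa"] by simp
    then have "word_eq RR (?Wb @ invw (?Wa @ invw ?Wd)) []" using we_inv_cancel by (rule we_t)
    then have K2: "word_eq RR (?Wa @ invw ?Wd) ?Wb" by (rule we_s[OF we_from_nil])
    have a: "word_eq RR ((?Wb @ [(S2g, True)]) @ invw Tw) (([(S2g, True)] @ ?Wa) @ invw Tw)" by (rule we_ctxR[OF m])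
    have b: "word_eq RR (([(S2g, True)] @ ?Wa) @ invw Tw) (([(S2g, True)] @ ?Wa) @ invw ?Wd)" by (rule we_ctxL[OF we_inv[OF tw]])
    have c: "word_eq RR ([(S2g, True)] @ (?Wa @ invw ?Wd)) ([(S2g, True)] @ ?Wb)" by (rule we_ctxL[OF K2])
    have "word_eq RR ((?Wb @ [(S2g, True)]) @ invw Tw) ([(S2g, True)] @ ?Wb)"
      by (rule we_chain3[OF a b c]) simp_all
    then show ?thesis using True unfolding Wc_def C_def by simp
  qed
  have loop: "word_eq RR (Wc @ concat (replicate k ([(S2g, e')] @ C))) (replicate k (S2g, e') @ Wc)" for k
  proof (induction k)
    case 0 then show ?case by (simp add: we_r)
  next
    case (Suc k)
    have a: "word_eq RR ((Wc @ [(S2g, e')] @ C) @ concat (replicate k ([(S2g, e')] @ C)))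
        (([(S2g, e')] @ Wc) @ concat (replicate k ([(S2g, e')] @ C)))" by (rule we_ctxR[OF step])
    have b: "word_eq RR ([(S2g, e')] @ (Wc @ concat (replicate k ([(S2g, e')] @ C))))
        ([(S2g, e')] @ (replicate k (S2g, e') @ Wc))" by (rule we_ctxL[OF Suc])
    have "word_eq RR ((Wc @ [(S2g, e')] @ C) @ concat (replicate k ([(S2g, e')] @ C))) ([(S2g, e')] @ (replicate k (S2g, e') @ Wc))"
      by (rule we_chain[OF a b]) simp_all
    then show ?case by simp
  qed
  have okW: "\<forall>l \<in> set (replicate n (S1g, e)). \<forall>q \<in> set Wc. lc RR l q"
    using ok unfolding Wc_def by (cases e') (auto simp: set_mkw intro: lc_SA lc_SB)
  define L where "L = concat (replicate n ([(S2g, e')] @ C))"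
  have 1: "word_eq RR ((replicate n (S1g, e) @ Wc) @ (replicate n (S1g, \<not> e) @ L @ invw Wc))
     ((Wc @ replicate n (S1g, e)) @ (replicate n (S1g, \<not> e) @ L @ invw Wc))"
    by (rule we_ctxR[OF comm_words[OF okW]])
  have 2: "word_eq RR (Wc @ (replicate n (S1g, e) @ replicate n (flp (S1g, e))) @ (L @ invw Wc))
      (Wc @ [] @ (L @ invw Wc))" by (rule we_ctx[OF rep_cancel])
  have 3: "word_eq RR ((Wc @ L) @ invw Wc) ((replicate n (S2g, e') @ Wc) @ invw Wc)"
    unfolding L_def by (rule we_ctxR[OF loop])
  have 4: "word_eq RR (replicate n (S2g, e') @ (Wc @ invw Wc)) (replicate n (S2g, e') @ [])"
    by (rule we_ctxL[OF we_inv_cancel])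
  have "word_eq RR ((replicate n (S1g, e) @ Wc) @ (replicate n (S1g, \<not> e) @ L @ invw Wc))
      ((replicate n (S2g, e') @ Wc) @ invw Wc)"
    by (rule we_chain3[OF 1 2 3]) simp_all
  then have "word_eq RR ((replicate n (S1g, e) @ Wc) @ (replicate n (S1g, \<not> e) @ L @ invw Wc))
      (replicate n (S2g, e') @ [])" using 4 by (simp add: we_t)
  then show ?thesis unfolding L_def by simp
qed

end


definition ex1 :: "('a gen2 \<times> bool) list \<Rightarrow> int" where
  "ex1 w = sum_list (map (\<lambda>l. if fst l = S1g then (if snd l then -1 else 1) else 0) w)"
definition ex2 :: "('a gen2 \<times> bool) list \<Rightarrow> int" where
  "ex2 w = sum_list (map (\<lambda>l. if fst l = S2g then (if snd l then -1 else 1) else 0) w)"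

fun th :: "'a gen2 \<times> bool \<Rightarrow> (nat \<times> bool) list" where
  "th (Ag i, b) = [(i, b)]"
| "th (Bg i, b) = [(i, b)]"
| "th (Zg i, b) = [(i, b)]"
| "th _ = []"

definition theta :: "('a gen2 \<times> bool) list \<Rightarrow> (nat \<times> bool) list" where
  "theta w = concat (map th w)"

definition MM :: "('a gen2 \<times> bool) list \<Rightarrow> nat" where
  "MM w = nat \<bar>ex1 w\<bar> + nat \<bar>ex2 w\<bar> + length (red (theta w))"

lemma ex1_simps[simp]: "ex1 [] = 0" "ex1 (x @ y) = ex1 x + ex1 y"
  "ex1 (l # w) = (if fst l = S1g then (if snd l then -1 else 1) else 0) + ex1 w"
  by (auto simp: ex1_def)
lemma ex2_simps[simp]: "ex2 [] = 0" "ex2 (x @ y) = ex2 x + ex2 y"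
  "ex2 (l # w) = (if fst l = S2g then (if snd l then -1 else 1) else 0) + ex2 w"
  by (auto simp: ex2_def)
lemma theta_simps[simp]: "theta [] = []" "theta (x @ y) = theta x @ theta y"
  "theta (l # w) = th l @ theta w"
  by (auto simp: theta_def)

lemma ex1_rep: "ex1 (replicate n l) = int n * ex1 [l]"
  by (induction n) (auto simp: algebra_simps)
lemma ex2_rep: "ex2 (replicate n l) = int n * ex2 [l]"
  by (induction n) (auto simp: algebra_simps)
lemma ex1_concat_rep: "ex1 (concat (replicate n x)) = int n * ex1 x"
  by (induction n) (auto simp: algebra_simps)
lemma ex2_concat_rep: "ex2 (concat (replicate n x)) = int n * ex2 x"
  by (induction n) (auto simp: algebra_simps)

lemma ex1_zero: "(\<forall>l \<in> set w. fst l \<noteq> S1g) \<Longrightarrow> ex1 w = 0"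
  by (induction w) auto
lemma ex2_zero: "(\<forall>l \<in> set w. fst l \<noteq> S2g) \<Longrightarrow> ex2 w = 0"
  by (induction w) auto
lemma theta_zero: "(\<forall>l \<in> set w. th l = []) \<Longrightarrow> theta w = []"
  by (induction w) auto

lemma letter_bound: "nat \<bar>ex1 [l]\<bar> + nat \<bar>ex2 [l]\<bar> + length (th l) \<le> 1"
  by (cases l rule: th.cases) auto

lemma MM_le: "MM w \<le> length w"
proof (induction w)
  case Nil then show ?case by (simp add: MM_def red_def)
next
  case (Cons l w)
  have a: "nat \<bar>ex1 (l # w)\<bar> \<le> nat \<bar>ex1 [l]\<bar> + nat \<bar>ex1 w\<bar>"
    using ex1_simps(2)[of "[l]" w] by (simp del: ex1_simps(3))
  have b: "nat \<bar>ex2 (l # w)\<bar> \<le> nat \<bar>ex2 [l]\<bar> + nat \<bar>ex2 w\<bar>"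
    using ex2_simps(2)[of "[l]" w] by (simp del: ex2_simps(3))
  have c: "length (red (theta (l # w))) \<le> length (th l) + length (red (theta w))"
    using length_foldr_push[of "th l" "red (theta w)"] by (simp add: red_append)
  have d: "length (l # w) = length w + 1" by simp
  show ?case using a b c d letter_bound[of l] Cons.IH unfolding MM_def by linarith
qed

lemma red_nil: "red [] = []" by (simp add: red_def)

lemma red_pair: "red [(i, False), (i, True)] = []" "red [(i, True), (i, False)] = []"
  by (simp_all add: red_def)

lemma cancel_inv: "ex1 [(a, b), (a, \<not> b)] = 0 \<and> ex2 [(a, b), (a, \<not> b)] = 0 \<and> red (theta [(a, b), (a, \<not> b)]) = []"
  by (cases a) (auto simp: red_def)

lemma MM_inv:
  assumes "word_eq Rel w w'"
    and rel: "\<forall>r \<in> Rel. ex1 r = 0 \<and> ex2 r = 0 \<and> red (theta r) = []"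
  shows "ex1 w = ex1 w' \<and> ex2 w = ex2 w' \<and> red (theta w) = red (theta w')"
  using assms(1)
proof (induction rule: word_eq.induct)
  case (we_cancel u a b v)
  then show ?case using cancel_inv[of a b] red_nil_ctx[of "theta [(a, b), (a, \<not> b)]" "theta u" "theta v"]
    by simp
next
  case (we_rel r u v)
  then show ?case using rel red_nil_ctx[of "theta r" "theta u" "theta v"] by simp
qed auto

lemma MM_eq: "word_eq Rel w w' \<Longrightarrow> \<forall>r \<in> Rel. ex1 r = 0 \<and> ex2 r = 0 \<and> red (theta r) = [] \<Longrightarrow> MM w = MM w'"
proof -
  assume a: "word_eq Rel w w'" and b: "\<forall>r \<in> Rel. ex1 r = 0 \<and> ex2 r = 0 \<and> red (theta r) = []"
  from MM_inv[OF a b] show ?thesis unfolding MM_def by simp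
qed

lemma comm_ok: "ex1 (commutator a b) = 0 \<and> ex2 (commutator a b) = 0"
  by (simp add: commutator_def)

lemma comm_th1: "(\<And>e. th (a, e) = []) \<Longrightarrow> red (theta (commutator a b)) = []"
  by (cases b rule: gen2.exhaust) (auto simp: commutator_def red_def)

lemma rels2_ok: "\<forall>r \<in> rels2 H T d p. ex1 r = 0 \<and> ex2 r = 0 \<and> red (theta r) = []"
proof
  fix r assume "r \<in> rels2 H T d p"
  then show "ex1 r = 0 \<and> ex2 r = 0 \<and> red (theta r) = []"
    unfolding rels2_def
  proof (elim UnE)
    assume "r \<in> {map (\<lambda>(t, b). (Tg t, b)) w | w. w \<in> lists (T \<times> UNIV) \<and> word_eval H w = \<one>\<^bsub>H\<^esub>}"
    then obtain w where r: "r = map (\<lambda>(t, b). (Tg t, b)) w" by blast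
    have "\<forall>l \<in> set r. fst l \<noteq> S1g \<and> fst l \<noteq> S2g \<and> th l = []" unfolding r by auto
    then show ?thesis using ex1_zero ex2_zero theta_zero by (metis red_rd rd.simps(1))
  qed (auto simp: comm_ok comm_th1 red_pair red_nil)
qed

lemma len2_ge:
  assumes "\<forall>l \<in> set w. valid2 T p (fst l)"
  shows "MM w \<le> len2 H T d p w"
proof -
  let ?P = "\<lambda>n. \<exists>w'. (\<forall>l \<in> set w'. valid2 T p (fst l)) \<and> length w' = n \<and> word_eq (rels2 H T d p) w w'"
  have "?P (length w)" using assms by (auto intro: word_eq.we_refl)
  then have "?P (Least ?P)" by (rule LeastI)
  then obtain w' where l: "length w' = Least ?P" and e: "word_eq (rels2 H T d p) w w'" by blast
  have "MM w = MM w'" by (rule MM_eq[OF e rels2_ok])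
  also have "\<dots> \<le> length w'" by (rule MM_le)
  finally show ?thesis unfolding len2_def l .
qed


lemma rd_map_inj:
  assumes "inj_on d {..<p}" "\<forall>c \<in> set iw. fst c < p" "rd (map (\<lambda>c. (d (fst c), snd c)) iw)"
  shows "rd iw"
  using assms(2,3)
proof (induction iw rule: rd.induct)
  case (3 a b L)
  have "d (fst a) = d (fst b) \<longleftrightarrow> fst a = fst b"
    using assms(1) 3(2) by (auto dest: inj_onD)
  then show ?case using 3 by auto
qed auto

lemma theta_mkA: "theta (mkw Ag iw) = iw"
  by (induction iw) (auto simp: mkw_def)
lemma theta_mkB: "theta (mkw Bg iw) = iw"
  by (induction iw) (auto simp: mkw_def)

lemma length_concat_rep: "length (concat (replicate n x)) = n * length x"
  by (induction n) auto

lemma set_concat_rep: "set (concat (replicate n x)) \<subseteq> set x"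
  by (induction n) auto

lemma Tg_invw: "map (\<lambda>(t, b). (Tg t, b)) (invw w) = invw (map (\<lambda>(t, b). (Tg t, b)) w)"
  by (induction w) (auto simp: flp_def)


theorem lemma4p2:
  fixes H :: "('a, 'b) monoid_scheme" and T :: "'a set" and d :: "nat \<Rightarrow> 'a" and p :: nat
    and \<Delta> f :: "real \<Rightarrow> real" and D r\<^sub>0 :: real
  assumes fp: "finitely_presented_on H T"
    and dT: "d ` {..<p} \<subseteq> T"
    and free: "free_basis H d p"
    and \<Delta>_bij: "bij_betw \<Delta> {0..} {0..}"
    and \<Delta>_mono: "mono_on {0..} \<Delta>"
    and \<Delta>_lip: "lipschitz_equiv \<Delta> (distortion H T (d ` {..<p}))"
    and \<Delta>_ge: "\<And>r. r \<ge> 1 \<Longrightarrow> \<Delta> r \<ge> r"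
    and f_inv1: "\<And>x. x \<ge> 0 \<Longrightarrow> f (\<Delta> x) = x"
    and f_inv2: "\<And>y. y \<ge> 0 \<Longrightarrow> \<Delta> (f y) = y"
    and f_le: "\<And>g. g \<in> generate H (d ` {..<p}) \<Longrightarrow>
                 f (real (wlen H (d ` {..<p}) g)) \<le> real (wlen H T g)"
    and D_gt: "D > 1" and r0_ge: "r\<^sub>0 \<ge> 1"
    and certs: "\<And>r. r \<ge> r\<^sub>0 \<Longrightarrow> \<exists>u \<in> generate H (d ` {..<p}).
                 palindromic H (d ` {..<p}) u \<and>
                 r / D \<le> real (wlen H (d ` {..<p}) u) \<and> real (wlen H (d ` {..<p}) u) \<le> r \<and>
                 real (wlen H T u) \<le> D * f r"
  shows "\<exists>N\<^sub>2 > 0. \<forall>r::nat. real r \<ge> r\<^sub>0 \<longrightarrow> (\<forall>\<epsilon> \<epsilon>' :: bool.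
           \<exists>ls :: ('a gen2 \<times> bool) list.
             (\<forall>l \<in> set ls. valid2 T p (fst l)) \<and>
             word_eq (rels2 H T d p) (replicate r (S1g, \<epsilon>) @ ls) (replicate r (S2g, \<epsilon>')) \<and>
             (\<forall>k \<le> length ls. len2 H T d p (replicate r (S1g, \<epsilon>) @ take k ls) \<ge> r) \<and>
             real (length ls) \<le> N\<^sub>2 * real r * (f (N\<^sub>2 * real r) + 1))"
proof -
  have grp: "group H" and Tc: "T \<subseteq> carrier H" using fp unfolding finitely_presented_on_def by auto
  interpret group H by (rule grp)
  have Rc: "d ` {..<p} \<subseteq> carrier H" using dT Tc by auto
  have injd: "inj_on d {..<p}" using free by (simp add: free_basis_def)
  have f_nn: "f y \<ge> 0" if y: "y \<ge> 0" for y
  proof -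
    have "y \<in> \<Delta> ` {0..}" using \<Delta>_bij y by (simp add: bij_betw_def)
    then obtain x where x: "x \<ge> 0" "y = \<Delta> x" by auto
    then show ?thesis using f_inv1 by simp
  qed
  have f_mono: "f y1 \<le> f y2" if y: "0 \<le> y1" "y1 \<le> y2" for y1 y2
  proof (rule ccontr)
    assume n: "\<not> f y1 \<le> f y2"
    have "\<Delta> (f y2) \<le> \<Delta> (f y1)"
      using n f_nn[of y2] y by (intro mono_onD[OF \<Delta>_mono]) auto
    then have "y2 \<le> y1" using f_inv2 y by simp
    then have "y1 = y2" using y by simp
    then show False using n by simp
  qed
  define N where "N = 2 * D + 2"
  have N_pos: "N > 0" using D_gt by (simp add: N_def)
  have main: "\<exists>ls :: ('a gen2 \<times> bool) list.
             (\<forall>l \<in> set ls. valid2 T p (fst l)) \<and>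
             word_eq (rels2 H T d p) (replicate r (S1g, \<epsilon>) @ ls) (replicate r (S2g, \<epsilon>')) \<and>
             (\<forall>k \<le> length ls. len2 H T d p (replicate r (S1g, \<epsilon>) @ take k ls) \<ge> r) \<and>
             real (length ls) \<le> N * real r * (f (N * real r) + 1)"
    if hr: "real r \<ge> r\<^sub>0" for r :: nat and \<epsilon> \<epsilon>' :: bool
  proof -
    have r1: "real r \<ge> 1" using hr r0_ge by simp
    have rD: "D * real r \<ge> r\<^sub>0" using hr D_gt r1 by (smt (verit) mult_le_cancel_right1)
    obtain u where u: "u \<in> generate H (d ` {..<p})" "palindromic H (d ` {..<p}) u"
      "D * real r / D \<le> real (wlen H (d ` {..<p}) u)" "real (wlen H (d ` {..<p}) u) \<le> D * real r"
      "real (wlen H T u) \<le> D * f (D * real r)"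
      using certs[OF rD] by blast
    have u3: "real r \<le> real (wlen H (d ` {..<p}) u)" using u(3) D_gt by simp
    from u(2) obtain w where w: "w \<in> lists (d ` {..<p} \<times> UNIV)" "freely_reduced w"
      "word_eval H w = u" "rev w = w" unfolding palindromic_def by blast
    have wc: "fst ` set w \<subseteq> carrier H" using w(1) Rc by fastforce
    have wT: "w \<in> lists (T \<times> UNIV)" using w(1) dT by fastforce
    let ?PR = "\<lambda>n. \<exists>w\<in>lists (d ` {..<p} \<times> UNIV). length w = n \<and> word_eval H w = u"
    have "?PR (length w)" using w by blast
    then have "?PR (Least ?PR)" by (rule LeastI)
    then obtain w0 where w0: "w0 \<in> lists (d ` {..<p} \<times> UNIV)" "length w0 = wlen H (d ` {..<p}) u"
      "word_eval H w0 = u" unfolding wlen_def by blast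
    have w0c: "fst ` set w0 \<subseteq> carrier H" using w0(1) Rc by fastforce
    have "red w0 = w"
    proof (rule free_unique[OF grp Rc free])
      show "red w0 \<in> lists (d ` {..<p} \<times> UNIV)" using w0(1) set_red[of w0] by blast
      show "w \<in> lists (d ` {..<p} \<times> UNIV)" by (rule w(1))
      show "rd (red w0)" by (rule rd_red)
      show "rd w" using w(2) by (simp add: rd_iff)
      show "word_eval H (red w0) = word_eval H w" using weval_red[OF w0c] w0(3) w(3) by simp
    qed
    then have lw1: "length w \<le> wlen H (d ` {..<p}) u" using length_red[of w0] w0(2) by simp
    have lw2: "wlen H (d ` {..<p}) u \<le> length w" unfolding wlen_def by (rule Least_le) (use w in blast)
    have lw_ge: "r \<le> length w" using u3 lw2 by linarith
    have lw_le: "real (length w) \<le> D * real r" using u(4) lw1 by linarith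
    let ?PT = "\<lambda>n. \<exists>w\<in>lists (T \<times> UNIV). length w = n \<and> word_eval H w = u"
    have "?PT (length w)" using wT w by blast
    then have "?PT (Least ?PT)" by (rule LeastI)
    then obtain Tw0 where Tw0: "Tw0 \<in> lists (T \<times> UNIV)" "length Tw0 = wlen H T u"
      "word_eval H Tw0 = u" unfolding wlen_def by blast
    have Tw0c: "fst ` set Tw0 \<subseteq> carrier H" using Tw0(1) Tc by fastforce
    define iw where "iw = map (\<lambda>c. (inv_into {..<p} d (fst c), snd c)) w"
    have iw_ok: "\<forall>c \<in> set iw. fst c < p"
      using w(1) unfolding iw_def by (fastforce intro: inv_into_into[of _ d "{..<p}", simplified])
    have iw_map: "map (\<lambda>c. (d (fst c), snd c)) iw = w"
      unfolding iw_def using w(1) by (induction w) (auto simp: f_inv_into_f)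
    have iw_rev: "rev iw = iw" unfolding iw_def using w(4) by (metis rev_map)
    have iw_rd: "rd iw" using rd_map_inj[OF injd iw_ok] iw_map w(2) by (simp add: rd_iff)
    have len_iw: "length iw = length w" unfolding iw_def by simp
    define Tw where "Tw = map (\<lambda>(t, b). (Tg t, b)) Tw0"
    have mkd: "mkw (\<lambda>i. Tg (d i)) iw = map (\<lambda>(t, b). (Tg t, b)) w"
      unfolding mkw_def by (subst iw_map[symmetric]) (simp add: comp_def)
    have ev1: "word_eval H (Tw0 @ invw w) = \<one>\<^bsub>H\<^esub>"
    proof -
      have uc: "u \<in> carrier H" using weval_carrier[OF wc] w(3) by simp
      show ?thesis using Tw0c wc uc by (simp add: weval_append weval_invw Tw0(3) w(3))
    qed
    have lT: "Tw0 @ invw w \<in> lists (T \<times> UNIV)" using Tw0(1) wT by (fastforce simp: flp_def)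
    have rel: "map (\<lambda>(t, b). (Tg t, b)) (Tw0 @ invw w) \<in> rels2 H T d p" by (rule m_H[OF lT ev1])
    have "word_eq (rels2 H T d p) (Tw @ invw (mkw (\<lambda>i. Tg (d i)) iw)) []"
      using rel_nil[OF rel] unfolding mkd Tw_def by (simp add: Tg_invw)
    then have tw: "word_eq (rels2 H T d p) Tw (mkw (\<lambda>i. Tg (d i)) iw)" by (rule we_from_nil)
    define Wc :: "('a gen2 \<times> bool) list" where "Wc = (if \<epsilon>' then mkw Bg iw else mkw Ag iw)"
    define C where "C = (if \<epsilon>' then invw Tw else Tw)"
    define L where "L = concat (replicate r ([(S2g, \<epsilon>')] @ C))"
    define ls where "ls = Wc @ replicate r (S1g, \<not> \<epsilon>) @ L @ invw Wc"
    have eq: "word_eq (rels2 H T d p) (replicate r (S1g, \<epsilon>) @ ls) (replicate r (S2g, \<epsilon>'))"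
      using path_eq[OF iw_ok iw_rev tw, where e="\<epsilon>" and e'="\<epsilon>'" and n=r] unfolding ls_def L_def Wc_def C_def .
    have Wc_set: "\<forall>l \<in> set Wc. fst l \<noteq> S1g \<and> fst l \<noteq> S2g \<and> valid2 T p (fst l)"
      using iw_ok unfolding Wc_def by (auto simp: set_mkw)
    have iWc_set: "\<forall>l \<in> set (invw Wc). fst l \<noteq> S1g \<and> fst l \<noteq> S2g \<and> valid2 T p (fst l)"
      using Wc_set by auto
    have C_set: "\<forall>l \<in> set C. fst l \<noteq> S1g \<and> fst l \<noteq> S2g \<and> th l = [] \<and> valid2 T p (fst l)"
      using Tw0(1) unfolding C_def Tw_def by auto
    have L_set: "\<forall>l \<in> set L. fst l \<noteq> S1g \<and> th l = [] \<and> valid2 T p (fst l)"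
      using C_set set_concat_rep[of r "[(S2g, \<epsilon>')] @ C"] unfolding L_def by auto
    have valid: "\<forall>l \<in> set ls. valid2 T p (fst l)"
      using Wc_set iWc_set L_set unfolding ls_def by auto
    have thWc: "theta Wc = iw" unfolding Wc_def by (simp add: theta_mkA theta_mkB)
    have lenWc: "length Wc = length w" unfolding Wc_def by (simp add: mkw_def len_iw)
    have lenC: "length C = length Tw0" unfolding C_def Tw_def by simp
    have lenL: "length L = r * (1 + length Tw0)" unfolding L_def by (simp add: length_concat_rep lenC)
    have len: "length ls = 2 * length w + r + r * (1 + length Tw0)"
      unfolding ls_def by (simp add: lenWc lenL)
    have ex1r: "nat \<bar>ex1 (replicate r (S1g, \<epsilon>))\<bar> = r" by (simp add: ex1_rep)
    have ex2L: "nat \<bar>ex2 L\<bar> = r"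
    proof -
      have "ex2 C = 0" using C_set by (intro ex2_zero) auto
      then show ?thesis unfolding L_def by (simp add: ex2_concat_rep)
    qed
    have th1: "theta (replicate r (S1g, \<epsilon>)) = []" by (rule theta_zero) simp
    have th1': "theta (replicate r (S1g, \<not> \<epsilon>)) = []" by (rule theta_zero) simp
    have pref: "r \<le> len2 H T d p (replicate r (S1g, \<epsilon>) @ take k ls)" if k: "k \<le> length ls" for k
    proof -
      let ?P = "replicate r (S1g, \<epsilon>) @ take k ls"
      have vP: "\<forall>l \<in> set ?P. valid2 T p (fst l)" using valid set_take_subset[of k ls] by auto
      have "r \<le> MM ?P"
      proof (cases "k \<le> length Wc")
        case True
        then have tk: "take k ls = take k Wc" unfolding ls_def by simp
        have "ex1 (take k Wc) = 0" using Wc_set set_take_subset[of k Wc] by (intro ex1_zero) auto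
        then have "nat \<bar>ex1 ?P\<bar> = r" using ex1r tk by simp
        then show ?thesis unfolding MM_def by simp
      next
        case False
        show ?thesis
        proof (cases "k \<le> length Wc + r + length L")
          case True
          define j where "j = k - length Wc"
          have j: "j \<le> length (replicate r (S1g, \<not> \<epsilon>) @ L)" using True False unfolding j_def by simp
          have tk: "take k ls = Wc @ take j (replicate r (S1g, \<not> \<epsilon>) @ L)"
            using False j unfolding ls_def j_def by simp
          have "theta (take j (replicate r (S1g, \<not> \<epsilon>) @ L)) = []"
            using L_set set_take_subset[of j "replicate r (S1g, \<not> \<epsilon>) @ L"]
            by (intro theta_zero) auto
          then have "theta ?P = iw" using tk th1 thWc by simp
          then have "length (red (theta ?P)) = length w" using red_rd[OF iw_rd] len_iw by simp
          then show ?thesis unfolding MM_def using lw_ge by simp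
        next
          case False2: False
          define j where "j = k - (length Wc + r + length L)"
          have tk: "take k ls = Wc @ replicate r (S1g, \<not> \<epsilon>) @ L @ take j (invw Wc)"
            using False False2 unfolding ls_def j_def by simp
          have "\<forall>l\<in>set (take j (invw Wc)). fst l \<noteq> S2g"
            using iWc_set set_take_subset[of j "invw Wc"] by blast
          then have "ex2 (take j (invw Wc)) = 0" by (rule ex2_zero)
          moreover have "ex2 Wc = 0" using Wc_set by (intro ex2_zero) auto
          ultimately have "nat \<bar>ex2 ?P\<bar> = r" using tk ex2L by (simp add: ex2_rep)
          then show ?thesis unfolding MM_def by simp
        qed
      qed
      also have "\<dots> \<le> len2 H T d p ?P" by (rule len2_ge[OF vP])
      finally show ?thesis .
    qed
    have lenb: "real (length ls) \<le> N * real r * (f (N * real r) + 1)"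
    proof -
      have T1: "real (length Tw0) \<le> D * f (D * real r)" using u(5) Tw0(2) by simp
      have fD: "0 \<le> f (D * real r)" using D_gt by (intro f_nn) simp
      have "D * real r \<le> (2 * D + 2) * real r" using D_gt by (intro mult_right_mono) auto
      then have fDN: "f (D * real r) \<le> f (N * real r)" using D_gt unfolding N_def by (intro f_mono) auto
      have "D * f (D * real r) \<le> N * f (N * real r)"
        using fD fDN D_gt unfolding N_def by (intro mult_mono) auto
      then have a: "real r * real (length Tw0) \<le> real r * (N * f (N * real r))"
        using T1 by (intro mult_left_mono) auto
      have "real (length ls) = 2 * real (length w) + real r + real r * (1 + real (length Tw0))"
        using len by (simp add: algebra_simps)
      also have "\<dots> \<le> 2 * (D * real r) + 2 * real r + real r * (N * f (N * real r))"
        using lw_le a by (simp add: algebra_simps)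
      also have "\<dots> = N * real r * (f (N * real r) + 1)" unfolding N_def by (simp add: algebra_simps)
      finally show ?thesis .
    qed
    show ?thesis using valid eq pref lenb by blast
  qed
  show ?thesis using N_pos main by blast
qed

end
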